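(* Let $I\subseteq\mathbb{R}$ be an interval and let $f:I\to\mathbb{R}$ be absolutely continuous on $I^{\circ}$, the interior of $I$. Let $a,b\in I^{\circ}$ with $a<b$, and suppose $f'\in L[a,b]$. If $$f(a)=\max_{a\le x\le b} f(x)=f(b)\quad\text{and}\quad \int_a^b f(t)\,dt=0,$$ then $$\max_{a\le x\le b} f(x)^2\le \frac{b-a}{12}\int_a^b f'(x)^2\,dx .$$ Moreover, the constant $\frac{b-a}{12}$ is best possible (it cannot be replaced by a smaller constant such that the inequality remains valid for all functions satisfying the hypotheses).
   Context: $L[a,b]$ denotes the space of Lebesgue integrable functions on $[a,b]$. *)

theory Defs
  imports "HOL-Analysis.Analysis"
begin

definition abs_cont_on :: "real set \<Rightarrow> (real \<Rightarrow> real) \<Rightarrow> bool" where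
  "abs_cont_on S f \<longleftrightarrow>
     (\<forall>e>0. \<exists>d>0. \<forall>(n::nat) (x::nat \<Rightarrow> real) (y::nat \<Rightarrow> real).
        (\<forall>k<n. x k < y k \<and> {x k..y k} \<subseteq> S) \<and>
        (\<forall>j<n. \<forall>k<n. j \<noteq> k \<longrightarrow> y j \<le> x k \<or> y k \<le> x j) \<and>
        (\<Sum>k<n. y k - x k) < d
        \<longrightarrow> (\<Sum>k<n. \<bar>f (y k) - f (x k)\<bar>) < e)"

definition admissible :: "real set \<Rightarrow> real \<Rightarrow> real \<Rightarrow> (real \<Rightarrow> real) \<Rightarrow> (real \<Rightarrow> real) \<Rightarrow> bool" where
  "admissible I a b f g \<longleftrightarrow>
     is_interval I \<and> abs_cont_on (interior I) f \<and>
     a \<in> interior I \<and> b \<in> interior I \<and> a < b \<and>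
     (AE x in lborel. x \<in> interior I \<longrightarrow> (f has_real_derivative g x) (at x)) \<and>
     set_integrable lborel {a..b} g \<and>
     (\<forall>x\<in>{a..b}. f x \<le> f a) \<and> f a = f b \<and>
     (LBINT t:{a..b}. f t) = 0"

end

theory Submission
  imports Defs
begin


abbreviation cnt :: "real set \<Rightarrow> real" where "cnt s \<equiv> measure lborel s"

lemma deriv_approx:
  fixes F :: "real \<Rightarrow> real"
  assumes "(F has_real_derivative D) (at x)" "e > 0"
  shows "\<exists>r>0. \<forall>y. \<bar>y - x\<bar> < r \<longrightarrow> \<bar>F y - F x - (y - x) * D\<bar> \<le> e * \<bar>y - x\<bar>"
proof -
  have "(F has_derivative (*) D) (at x)"
    using assms(1) by (simp add: has_field_derivative_def)
  then show ?thesis using assms(2) unfolding has_derivative_at_alt by (auto simp: real_norm_def mult.commute)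
qed

lemma mlc: "measure lebesgue {u..v::real} = (if u \<le> v then v - u else 0)" by simp

lemma disj_intervals:
  fixes u1 v1 u2 v2 :: real
  assumes "u1 < v1" "u2 < v2" "interior {u1..v1} \<inter> interior {u2..v2} = {}"
  shows "v1 \<le> u2 \<or> v2 \<le> u1"
proof (rule ccontr)
  assume "\<not> ?thesis"
  then have "(max u1 u2 + min v1 v2)/2 \<in> interior {u1..v1} \<inter> interior {u2..v2}"
    using assms by (auto simp: max_def min_def split: if_splits)
  then show False using assms(3) by blast
qed

lemma tag_interval:
  assumes "p tagged_division_of {c..d::real}" "(x,K) \<in> p"
  obtains u v where "K = {u..v}" "u \<le> v" "x \<in> K" "K \<subseteq> {c..d}"
proof -
  from tagged_division_ofD(4)[OF assms] obtain u v where K: "K = cbox u v" by blast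
  have "x \<in> K" "K \<subseteq> {c..d}" using tagged_division_ofD(2,3)[OF assms] by auto
  with K show ?thesis using that by auto
qed

lemma ac_ftc_hk:
  fixes F G :: "real \<Rightarrow> real" and N :: "real set"
  assumes cd: "c \<le> d" and ac: "abs_cont_on {c..d} F" and negN: "negligible N"
    and der: "\<And>x. x \<in> {c..d} \<Longrightarrow> x \<notin> N \<Longrightarrow> (F has_real_derivative G x) (at x)"
  shows "((\<lambda>x. if x \<in> N then 0 else G x) has_integral (F d - F c)) {c..d}"
proof -
  define h where "h = (\<lambda>x. if x \<in> N then 0 else G x)"
  show ?thesis unfolding h_def[symmetric] has_integral_real
  proof (intro allI impI)
    fix e :: real assume e: "e > 0"
    define e1 where "e1 = e / (2 * (d - c + 1))"
    have e1: "e1 > 0" using e cd by (simp add: e1_def)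
    have e1b: "e1 * (d - c) < e/2"
    proof -
      have "e1 * (d - c) = (e/2) * ((d - c) / (d - c + 1))" by (simp add: e1_def field_simps)
      also have "\<dots> < (e/2) * 1" using e cd by (intro mult_strict_left_mono) auto
      finally show ?thesis by simp
    qed
    have "e/2 > 0" using e by simp
    from ac[unfolded abs_cont_on_def, rule_format, OF \<open>e/2 > 0\<close>]
    obtain \<delta> where \<delta>: "\<delta> > 0" and acd: "\<forall>(n::nat) (x::nat \<Rightarrow> real) (y::nat \<Rightarrow> real). (\<forall>k<n. x k < y k \<and> {x k..y k} \<subseteq> {c..d}) \<and>
        (\<forall>j<n. \<forall>k<n. j \<noteq> k \<longrightarrow> y j \<le> x k \<or> y k \<le> x j) \<and>
        (\<Sum>k<n. y k - x k) < \<delta> \<longrightarrow> (\<Sum>k<n. \<bar>F (y k) - F (x k)\<bar>) < e/2"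
      by blast
    have Nl: "N \<in> sets lebesgue" "N \<in> lmeasurable" "measure lebesgue N = 0"
      using negN negligible_imp_sets negligible_imp_measurable negligible_imp_measure0 by auto
    obtain U where U: "open U" "N \<subseteq> U" "(U - N) \<in> lmeasurable" "emeasure lebesgue (U - N) < ennreal \<delta>"
      using sets_lebesgue_outer_open[OF Nl(1) \<delta>] by blast
    have UN: "U = N \<union> (U - N)" using U(2) by blast
    have Ul: "U \<in> lmeasurable" using Nl(2) U(3) UN by (metis fmeasurable.Un)
    have "measure lebesgue (U - N) < \<delta>"
      using U(3,4) \<delta> by (simp add: emeasure_eq_measure2 ennreal_less_iff)
    moreover have "measure lebesgue U \<le> measure lebesgue N + measure lebesgue (U - N)"
      using measure_Un_le[of N lebesgue "U - N"] Nl U(3) UN by (metis fmeasurableD)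
    ultimately have Um: "measure lebesgue U < \<delta>" using Nl(3) by linarith
    have "\<forall>x\<in>N. \<exists>r>0. ball x r \<subseteq> U" using U(1,2) open_contains_ball by blast
    then obtain rN where rN: "\<And>x. x \<in> N \<Longrightarrow> rN x > 0 \<and> ball x (rN x) \<subseteq> U" by metis
    have "\<forall>x \<in> {c..d} - N. \<exists>r>0. \<forall>y. \<bar>y - x\<bar> < r \<longrightarrow> \<bar>F y - F x - (y - x) * G x\<bar> \<le> e1 * \<bar>y - x\<bar>"
      using deriv_approx[OF der e1] by blast
    then obtain rG where rG: "\<And>x. x \<in> {c..d} - N \<Longrightarrow> rG x > 0 \<and>
          (\<forall>y. \<bar>y - x\<bar> < rG x \<longrightarrow> \<bar>F y - F x - (y - x) * G x\<bar> \<le> e1 * \<bar>y - x\<bar>)" by metis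
    define r where "r x = (if x \<in> N then rN x else if x \<in> {c..d} then rG x else 1)" for x
    have rpos: "\<forall>x. 0 < r x" using rN rG by (simp add: r_def)
    show "\<exists>\<gamma>. gauge \<gamma> \<and> (\<forall>\<D>. \<D> tagged_division_of {c..d} \<and> \<gamma> fine \<D> \<longrightarrow>
        norm ((\<Sum>(x,k)\<in>\<D>. cnt k *\<^sub>R h x) - (F d - F c)) < e)"
    proof (intro exI conjI allI impI)
      show "gauge (\<lambda>x. ball x (r x))" using rpos by (rule gauge_ball_dependent)
      fix p assume pp: "p tagged_division_of {c..d} \<and> (\<lambda>x. ball x (r x)) fine p"
      then have ptag: "p tagged_division_of {c..d}" and fine: "(\<lambda>x. ball x (r x)) fine p" by auto
      have finp: "finite p" using ptag by blast
      define t where "t = (\<lambda>(x,K). cnt K * h x - (F (Sup K) - F (Inf K)))"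
      have eqt: "(\<Sum>(x,K)\<in>p. cnt K *\<^sub>R h x) - (F d - F c) = (\<Sum>z\<in>p. t z)"
        using additive_tagged_division_1[OF cd ptag, of F]
        by (simp add: t_def sum_subtractf split_def)
      define pN where "pN = {z \<in> p. fst z \<in> N}"
      have bndG: "\<bar>t (x,K)\<bar> \<le> e1 * cnt K" if xK: "(x,K) \<in> p" and xN: "x \<notin> N" for x K
      proof -
        obtain u v where K: "K = {u..v}" "u \<le> v" "x \<in> K" "K \<subseteq> {c..d}"
          using tag_interval[OF ptag xK] by blast
        have xc: "x \<in> {c..d} - N" using K xN by auto
        have sub: "K \<subseteq> ball x (rG x)" using fineD[OF fine xK] xc by (simp add: r_def)
        have "u \<in> K" "v \<in> K" using K by auto
        then have "u \<in> ball x (rG x)" "v \<in> ball x (rG x)" using sub by blast+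
        then have uu: "\<bar>u - x\<bar> < rG x" "\<bar>v - x\<bar> < rG x" by (auto simp: dist_real_def)
        have A: "\<bar>F v - F x - (v - x) * G x\<bar> \<le> e1 * \<bar>v - x\<bar>" using rG[OF xc] uu by blast
        have B: "\<bar>F u - F x - (u - x) * G x\<bar> \<le> e1 * \<bar>u - x\<bar>" using rG[OF xc] uu by blast
        have "t (x,K) = (v - u) * G x - (F v - F u)" using K xc by (simp add: t_def h_def)
        also have "\<bar>\<dots>\<bar> \<le> e1 * \<bar>v - x\<bar> + e1 * \<bar>u - x\<bar>" using A B by (simp add: algebra_simps abs_if split: if_splits)
        also have "\<dots> = e1 * cnt K" using K by (simp add: algebra_simps)
        finally show ?thesis .
      qed
      have tN: "\<bar>t (x,K)\<bar> = \<bar>F (Sup K) - F (Inf K)\<bar>" if "(x,K) \<in> p" "x \<in> N" for x K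
        using that by (simp add: t_def h_def)
      have cntK: "cnt K = Sup K - Inf K" if xKp: "(x,K) \<in> p" for x K
      proof -
        obtain u v where K: "K = {u..v}" "u \<le> v" using tag_interval[OF ptag xKp] by blast
        then show ?thesis by simp
      qed
      have contsum: "(\<Sum>(x,K)\<in>p. cnt K) = d - c"
        using additive_tagged_division_1[OF cd ptag, of "\<lambda>x. x"] cntK
        by (simp add: split_def) (metis (no_types, lifting) prod.collapse sum.cong)
      define p' where "p' = {z \<in> pN. cnt (snd z) \<noteq> 0}"
      have finp': "finite p'" using finp by (simp add: p'_def pN_def)
      have p'prop: "\<exists>u v. K = {u..v} \<and> u < v \<and> K \<subseteq> {c..d} \<and> K \<subseteq> U" if "(x,K) \<in> p'" for x K
      proof -
        have xK: "(x,K) \<in> p" "x \<in> N" "cnt K \<noteq> 0" using that by (auto simp: p'_def pN_def)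
        obtain u v where K: "K = {u..v}" "u \<le> v" "x \<in> K" "K \<subseteq> {c..d}" using tag_interval[OF ptag xK(1)] by blast
        have "K \<subseteq> ball x (rN x)" using fineD[OF fine xK(1)] xK(2) by (simp add: r_def)
        also have "\<dots> \<subseteq> U" using rN[OF xK(2)] by blast
        finally show ?thesis using K xK(3) by (intro exI[of _ u] exI[of _ v]) auto
      qed
      have inj: "inj_on snd p'"
      proof (rule inj_onI)
        fix z1 z2 assume z: "z1 \<in> p'" "z2 \<in> p'" "snd z1 = snd z2"
        show "z1 = z2"
        proof (rule ccontr)
          assume ne: "z1 \<noteq> z2"
          obtain x1 K where z1: "z1 = (x1, K)" by (cases z1)
          obtain x2 where z2: "z2 = (x2, K)" using z(3) z1 by (cases z2) auto
          have "interior K \<inter> interior K = {}"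
            using tagged_division_ofD(5)[OF ptag, of x1 K x2 K] z ne z1 z2 by (auto simp: p'_def pN_def)
          moreover obtain u v where "K = {u..v}" "u < v" using p'prop z(1) z1 by blast
          ultimately show False by auto
        qed
      qed
      have sumN': "(\<Sum>z\<in>p'. \<bar>F (Sup (snd z)) - F (Inf (snd z))\<bar>) < e/2"
      proof -
        obtain b where b: "bij_betw b {..<card p'} p'"
          using ex_bij_betw_nat_finite[OF finp'] by (auto simp: atLeast0LessThan)
        define n where "n = card p'"
        define X where "X k = Inf (snd (b k))" for k
        define Y where "Y k = Sup (snd (b k))" for k
        have bk: "b k \<in> p'" if "k < n" for k using b that by (auto simp: n_def bij_betw_def)
        have XY: "snd (b k) = {X k..Y k} \<and> X k < Y k \<and> {X k..Y k} \<subseteq> {c..d}" if kn: "k < n" for k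
        proof -
          obtain u v where "snd (b k) = {u..v} \<and> u < v \<and> snd (b k) \<subseteq> {c..d} \<and> snd (b k) \<subseteq> U"
            using p'prop[of "fst (b k)" "snd (b k)"] bk[OF kn] by auto
          then show ?thesis by (auto simp: X_def Y_def)
        qed
        have c1: "\<forall>k<n. X k < Y k \<and> {X k..Y k} \<subseteq> {c..d}" using XY by blast
        have c2: "\<forall>j<n. \<forall>k<n. j \<noteq> k \<longrightarrow> Y j \<le> X k \<or> Y k \<le> X j"
        proof (intro allI impI)
          fix j k assume jk: "j < n" "k < n" "j \<noteq> k"
          have "b j \<noteq> b k" using b jk by (auto simp: n_def bij_betw_def inj_on_def)
          moreover have "b j \<in> p" "b k \<in> p" using bk jk by (auto simp: p'_def pN_def)
          ultimately have "interior (snd (b j)) \<inter> interior (snd (b k)) = {}"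
            using tagged_division_ofD(5)[OF ptag, of "fst (b j)" "snd (b j)" "fst (b k)" "snd (b k)"] by auto
          then show "Y j \<le> X k \<or> Y k \<le> X j" using disj_intervals[of "X j" "Y j" "X k" "Y k"] XY jk by auto
        qed
        have "(\<Sum>k<n. Y k - X k) = (\<Sum>z\<in>p'. Sup (snd z) - Inf (snd z))"
          using sum.reindex_bij_betw[OF b, of "\<lambda>z. Sup (snd z) - Inf (snd z)"] by (simp add: X_def Y_def n_def)
        also have "\<dots> = (\<Sum>z\<in>p'. cnt (snd z))"
          by (rule sum.cong) (auto simp: p'_def pN_def intro!: cntK[symmetric])
        also have "\<dots> = (\<Sum>K\<in>snd ` p'. cnt K)" using sum.reindex[OF inj, of cnt] by simp
        also have "\<dots> = (\<Sum>K\<in>snd ` p'. measure lebesgue K)"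
        proof (rule sum.cong)
          fix K assume "K \<in> snd ` p'"
          then obtain x where "(x,K) \<in> p'" by force
          then obtain u v where "K = {u..v}" "u < v" using p'prop by blast
          then show "cnt K = measure lebesgue K" by simp
        qed simp
        also have "\<dots> = measure lebesgue (\<Union>(snd ` p'))"
        proof (rule content_division)
          have "snd ` p division_of \<Union>(snd ` p)"
            using division_of_tagged_division[OF ptag] division_ofD(6)[OF division_of_tagged_division[OF ptag]] by simp
          then show "snd ` p' division_of \<Union>(snd ` p')"
            by (rule division_of_subset) (auto simp: p'_def pN_def)
        qed
        also have "\<dots> \<le> measure lebesgue U"
        proof (rule measure_mono_fmeasurable)
          show "\<Union>(snd ` p') \<subseteq> U" using p'prop by fastforce
          show "\<Union>(snd ` p') \<in> sets lebesgue" using finp' p'prop by (intro sets.finite_Union) fastforce+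
          show "U \<in> lmeasurable" by (rule Ul)
        qed
        finally have c3: "(\<Sum>k<n. Y k - X k) < \<delta>" using Um by linarith
        have "(\<Sum>k<n. \<bar>F (Y k) - F (X k)\<bar>) < e/2" using acd c1 c2 c3 by blast
        then show ?thesis
          using sum.reindex_bij_betw[OF b, of "\<lambda>z. \<bar>F (Sup (snd z)) - F (Inf (snd z))\<bar>"] by (simp add: X_def Y_def n_def)
      qed
      have sumN: "(\<Sum>z\<in>pN. \<bar>t z\<bar>) < e/2"
      proof -
        have "(\<Sum>z\<in>pN. \<bar>t z\<bar>) = (\<Sum>z\<in>p'. \<bar>t z\<bar>)"
        proof (rule sum.mono_neutral_right)
          show "finite pN" using finp by (simp add: pN_def)
          show "p' \<subseteq> pN" by (auto simp: p'_def)
          show "\<forall>z\<in>pN - p'. \<bar>t z\<bar> = 0"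
          proof
            fix z assume z: "z \<in> pN - p'"
            obtain x K where zz: "z = (x,K)" by (cases z)
            have xK: "(x,K) \<in> p" "x \<in> N" "cnt K = 0" using z zz by (auto simp: p'_def pN_def)
            obtain u v where K: "K = {u..v}" "u \<le> v" using tag_interval[OF ptag xK(1)] by blast
            then have "u = v" using xK(3) by simp
            then show "\<bar>t z\<bar> = 0" using K xK zz by (simp add: t_def h_def)
          qed
        qed
        also have "\<dots> = (\<Sum>z\<in>p'. \<bar>F (Sup (snd z)) - F (Inf (snd z))\<bar>)"
          by (rule sum.cong) (auto simp: p'_def pN_def tN)
        finally show ?thesis using sumN' by simp
      qed
      have sumG: "(\<Sum>z\<in>p - pN. \<bar>t z\<bar>) \<le> e1 * (d - c)"
      proof -
        have "(\<Sum>z\<in>p - pN. \<bar>t z\<bar>) \<le> (\<Sum>z\<in>p - pN. e1 * cnt (snd z))"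
          by (rule sum_mono) (auto simp: pN_def intro!: bndG)
        also have "\<dots> \<le> (\<Sum>z\<in>p. e1 * cnt (snd z))"
          using finp e1 by (intro sum_mono2) auto
        also have "\<dots> = e1 * (d - c)" using contsum by (simp add: sum_distrib_left[symmetric] split_def)
        finally show ?thesis .
      qed
      have "norm ((\<Sum>(x,k)\<in>p. cnt k *\<^sub>R h x) - (F d - F c)) = \<bar>\<Sum>z\<in>p. t z\<bar>"
        using eqt by simp
      also have "\<dots> \<le> (\<Sum>z\<in>p. \<bar>t z\<bar>)" by (rule sum_abs)
      also have "\<dots> = (\<Sum>z\<in>pN. \<bar>t z\<bar>) + (\<Sum>z\<in>p - pN. \<bar>t z\<bar>)"
        using finp by (subst sum.subset_diff[of pN p]) (auto simp: pN_def)
      also have "\<dots> < e" using sumN sumG e1b by linarith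
      finally show "norm ((\<Sum>(x,k)\<in>p. cnt k *\<^sub>R h x) - (F d - F c)) < e" .
    qed
  qed
qed



lemma ac_ftc:
  fixes F G :: "real \<Rightarrow> real"
  assumes cd: "c \<le> d" and ac: "abs_cont_on {c..d} F" and negN: "negligible N"
    and der: "\<And>x. x \<in> {c..d} \<Longrightarrow> x \<notin> N \<Longrightarrow> (F has_real_derivative G x) (at x)"
  shows "(G has_integral (F d - F c)) {c..d}"
  by (rule has_integral_spike[OF negN _ ac_ftc_hk[OF assms]]) auto

lemma abs_cont_on_subset:
  assumes "abs_cont_on T f" "S \<subseteq> T"
  shows "abs_cont_on S f"
  unfolding abs_cont_on_def
proof (intro allI impI)
  fix e :: real assume "e > 0"
  then obtain d where "d > 0" and d: "\<forall>(n::nat) (x::nat \<Rightarrow> real) (y::nat \<Rightarrow> real).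
        (\<forall>k<n. x k < y k \<and> {x k..y k} \<subseteq> T) \<and>
        (\<forall>j<n. \<forall>k<n. j \<noteq> k \<longrightarrow> y j \<le> x k \<or> y k \<le> x j) \<and>
        (\<Sum>k<n. y k - x k) < d
        \<longrightarrow> (\<Sum>k<n. \<bar>f (y k) - f (x k)\<bar>) < e"
    using assms(1) unfolding abs_cont_on_def by blast
  show "\<exists>r>0. \<forall>(n::nat) (x::nat \<Rightarrow> real) (y::nat \<Rightarrow> real).
        (\<forall>k<n. x k < y k \<and> {x k..y k} \<subseteq> S) \<and>
        (\<forall>j<n. \<forall>k<n. j \<noteq> k \<longrightarrow> y j \<le> x k \<or> y k \<le> x j) \<and>
        (\<Sum>k<n. y k - x k) < r
        \<longrightarrow> (\<Sum>k<n. \<bar>f (y k) - f (x k)\<bar>) < e"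
  proof (intro exI[of _ d] conjI allI impI)
    show "d > 0" by fact
    fix n :: nat and x y :: "nat \<Rightarrow> real"
    assume H: "(\<forall>k<n. x k < y k \<and> {x k..y k} \<subseteq> S) \<and>
        (\<forall>j<n. \<forall>k<n. j \<noteq> k \<longrightarrow> y j \<le> x k \<or> y k \<le> x j) \<and>
        (\<Sum>k<n. y k - x k) < d"
    then have "\<forall>k<n. x k < y k \<and> {x k..y k} \<subseteq> T" using assms(2) by blast
    then show "(\<Sum>k<n. \<bar>f (y k) - f (x k)\<bar>) < e" using H d by blast
  qed
qed

lemma abs_cont_continuous:
  assumes ac: "abs_cont_on {c..d} F"
  shows "continuous_on {c..d} F"
  unfolding continuous_on_iff
proof (intro ballI allI impI)
  fix x e :: real assume x: "x \<in> {c..d}" and e: "e > 0"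
  then obtain \<delta> where "\<delta> > 0" and d: "\<forall>(n::nat) (X::nat \<Rightarrow> real) (Y::nat \<Rightarrow> real).
        (\<forall>k<n. X k < Y k \<and> {X k..Y k} \<subseteq> {c..d}) \<and>
        (\<forall>j<n. \<forall>k<n. j \<noteq> k \<longrightarrow> Y j \<le> X k \<or> Y k \<le> X j) \<and>
        (\<Sum>k<n. Y k - X k) < \<delta>
        \<longrightarrow> (\<Sum>k<n. \<bar>F (Y k) - F (X k)\<bar>) < e"
    using ac unfolding abs_cont_on_def by blast
  show "\<exists>r>0. \<forall>x'\<in>{c..d}. dist x' x < r \<longrightarrow> dist (F x') (F x) < e"
  proof (intro exI conjI ballI impI)
    show "\<delta> > 0" by fact
    fix x' assume x': "x' \<in> {c..d}" and dx: "dist x' x < \<delta>"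
    show "dist (F x') (F x) < e"
    proof (cases "x' = x")
      case True then show ?thesis using e by simp
    next
      case False
      have "(\<Sum>k<1::nat. \<bar>F ((\<lambda>_. max x x') k) - F ((\<lambda>_. min x x') k)\<bar>) < e"
        using d[rule_format, of 1 "\<lambda>_. min x x'" "\<lambda>_. max x x'"] False x x' dx
        by (auto simp: dist_real_def min_def max_def split: if_splits)
      then show ?thesis using False by (auto simp: dist_real_def min_def max_def abs_minus_commute split: if_splits)
    qed
  qed
qed

lemma abs_cont_mult:
  assumes ac: "abs_cont_on {c..d} F"
  shows "abs_cont_on {c..d} (\<lambda>s. (s - t) * F s)"
proof -
  have "compact (F ` {c..d})" using abs_cont_continuous[OF ac] by (intro compact_continuous_image) auto
  then obtain M0 where M0: "\<forall>y\<in>F ` {c..d}. norm y \<le> M0" using compact_imp_bounded bounded_iff by metis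
  define M where "M = max M0 0"
  have M: "M \<ge> 0" "\<And>x. x \<in> {c..d} \<Longrightarrow> \<bar>F x\<bar> \<le> M" using M0 by (auto simp: M_def intro: le_max_iff_disj[THEN iffD2])
  define R where "R = \<bar>c - t\<bar> + \<bar>d - t\<bar>"
  have R: "R \<ge> 0" "\<And>x. x \<in> {c..d} \<Longrightarrow> \<bar>x - t\<bar> \<le> R" by (auto simp: R_def abs_if)
  show ?thesis unfolding abs_cont_on_def
  proof (intro allI impI)
    fix e :: real assume e: "e > 0"
    then have "e / (2 * (R + 1)) > 0" using R by simp
    then obtain \<delta> where "\<delta> > 0" and d: "\<forall>(n::nat) (X::nat \<Rightarrow> real) (Y::nat \<Rightarrow> real).
        (\<forall>k<n. X k < Y k \<and> {X k..Y k} \<subseteq> {c..d}) \<and>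
        (\<forall>j<n. \<forall>k<n. j \<noteq> k \<longrightarrow> Y j \<le> X k \<or> Y k \<le> X j) \<and>
        (\<Sum>k<n. Y k - X k) < \<delta>
        \<longrightarrow> (\<Sum>k<n. \<bar>F (Y k) - F (X k)\<bar>) < e / (2 * (R + 1))"
      using ac unfolding abs_cont_on_def by blast
    show "\<exists>r>0. \<forall>(n::nat) (x::nat \<Rightarrow> real) (y::nat \<Rightarrow> real).
        (\<forall>k<n. x k < y k \<and> {x k..y k} \<subseteq> {c..d}) \<and>
        (\<forall>j<n. \<forall>k<n. j \<noteq> k \<longrightarrow> y j \<le> x k \<or> y k \<le> x j) \<and>
        (\<Sum>k<n. y k - x k) < r
        \<longrightarrow> (\<Sum>k<n. \<bar>(y k - t) * F (y k) - (x k - t) * F (x k)\<bar>) < e"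
    proof (intro exI conjI allI impI)
      show "min \<delta> (e / (2 * (M + 1))) > 0" using \<open>\<delta> > 0\<close> e M by simp
      fix n :: nat and X Y :: "nat \<Rightarrow> real"
      assume H: "(\<forall>k<n. X k < Y k \<and> {X k..Y k} \<subseteq> {c..d}) \<and>
        (\<forall>j<n. \<forall>k<n. j \<noteq> k \<longrightarrow> Y j \<le> X k \<or> Y k \<le> X j) \<and>
        (\<Sum>k<n. Y k - X k) < min \<delta> (e / (2 * (M + 1)))"
      have S1: "(\<Sum>k<n. \<bar>F (Y k) - F (X k)\<bar>) < e / (2 * (R + 1))" using d H by auto
      have S2: "(\<Sum>k<n. Y k - X k) < e / (2 * (M + 1))" using H by auto
      have S2': "(\<Sum>k<n. Y k - X k) \<ge> 0" using H by (intro sum_nonneg) (auto simp: less_imp_le)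
      have trm: "\<bar>(Y k - t) * F (Y k) - (X k - t) * F (X k)\<bar> \<le> R * \<bar>F (Y k) - F (X k)\<bar> + M * (Y k - X k)"
        if k: "k < n" for k
      proof -
        have XY: "X k \<in> {c..d}" "Y k \<in> {c..d}" "X k < Y k" using H k by auto
        have "(Y k - t) * F (Y k) - (X k - t) * F (X k) = (Y k - t) * (F (Y k) - F (X k)) + (Y k - X k) * F (X k)"
          by (simp add: algebra_simps)
        also have "\<bar>\<dots>\<bar> \<le> \<bar>Y k - t\<bar> * \<bar>F (Y k) - F (X k)\<bar> + (Y k - X k) * \<bar>F (X k)\<bar>"
          using XY by (simp add: abs_mult abs_triangle_ineq[THEN order_trans])
        also have "\<dots> \<le> R * \<bar>F (Y k) - F (X k)\<bar> + M * (Y k - X k)"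
          using XY R(2)[of "Y k"] M(2)[of "X k"]
          by (intro add_mono mult_right_mono) (auto simp: mult.commute intro: mult_left_mono)
        finally show ?thesis .
      qed
      have "(\<Sum>k<n. \<bar>(Y k - t) * F (Y k) - (X k - t) * F (X k)\<bar>) \<le> (\<Sum>k<n. R * \<bar>F (Y k) - F (X k)\<bar> + M * (Y k - X k))"
        by (rule sum_mono) (use trm in auto)
      also have "\<dots> = R * (\<Sum>k<n. \<bar>F (Y k) - F (X k)\<bar>) + M * (\<Sum>k<n. Y k - X k)"
        by (simp add: sum.distrib sum_distrib_left)
      also have "\<dots> < e / 2 + e / 2"
      proof (rule add_le_less_mono)
        have "R * (\<Sum>k<n. \<bar>F (Y k) - F (X k)\<bar>) \<le> (R + 1) * (\<Sum>k<n. \<bar>F (Y k) - F (X k)\<bar>)"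
          by (intro mult_right_mono) (auto intro: sum_nonneg)
        also have "\<dots> \<le> (R + 1) * (e / (2 * (R + 1)))" using S1 R by (intro mult_left_mono) auto
        also have "\<dots> = e / 2" using R by (simp add: field_simps)
        finally show "R * (\<Sum>k<n. \<bar>F (Y k) - F (X k)\<bar>) \<le> e / 2" .
        have "M * (\<Sum>k<n. Y k - X k) \<le> (M + 1) * (\<Sum>k<n. Y k - X k)"
          using S2' by (intro mult_right_mono) auto
        also have "\<dots> < (M + 1) * (e / (2 * (M + 1)))" using S2 M by (intro mult_strict_left_mono) auto
        also have "\<dots> = e / 2" using M by (simp add: field_simps)
        finally show "M * (\<Sum>k<n. Y k - X k) < e / 2" .
      qed
      finally show "(\<Sum>k<n. \<bar>(Y k - t) * F (Y k) - (X k - t) * F (X k)\<bar>) < e" by simp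
    qed
  qed
qed



lemma cs_hk:
  fixes k g :: "real \<Rightarrow> real"
  assumes A: "((\<lambda>s. (k s)^2) has_integral A) S" and B: "((\<lambda>s. k s * g s) has_integral B) S"
    and C: "((\<lambda>s. (g s)^2) has_integral C) S" and Apos: "A > 0"
  shows "B^2 \<le> A * C"
proof -
  define l where "l = B / A"
  have "((\<lambda>s. l^2 * (k s)^2 - 2*l * (k s * g s) + (g s)^2) has_integral (l^2 * A - 2*l*B + C)) S"
    by (intro has_integral_add has_integral_diff has_integral_mult_right A B C)
  moreover have "(\<lambda>s. l^2 * (k s)^2 - 2*l * (k s * g s) + (g s)^2) = (\<lambda>s. (l * k s - g s)^2)"
    by (auto simp: fun_eq_iff power2_eq_square algebra_simps)
  ultimately have "((\<lambda>s. (l * k s - g s)^2) has_integral (l^2 * A - 2*l*B + C)) S" by simp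
  then have "0 \<le> l^2 * A - 2*l*B + C" by (rule has_integral_nonneg) simp
  also have "l^2 * A - 2*l*B + C = C - B^2 / A" using Apos by (simp add: l_def power2_eq_square field_simps)
  finally show ?thesis using Apos by (simp add: field_simps)
qed

lemma poly_int:
  fixes a t \<alpha> :: real
  assumes "a \<le> t"
  shows "((\<lambda>s. (s + \<alpha>)^2) has_integral ((t + \<alpha>)^3/3 - (a + \<alpha>)^3/3)) {a..t}"
proof -
  have "((\<lambda>s. (s + \<alpha>)^2) has_integral ((\<lambda>s. (s + \<alpha>)^3/3) t - (\<lambda>s. (s + \<alpha>)^3/3) a)) {a..t}"
  proof (rule fundamental_theorem_of_calculus[OF assms])
    fix x assume "x \<in> {a..t}"
    have "((\<lambda>s. (s + \<alpha>)^3/3) has_real_derivative (x + \<alpha>)^2) (at x within {a..t})"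
      by (auto intro!: derivative_eq_intros simp: power2_eq_square)
    then show "((\<lambda>s. (s + \<alpha>)^3/3) has_vector_derivative (x + \<alpha>)^2) (at x within {a..t})"
      by (simp add: has_real_derivative_iff_has_vector_derivative)
  qed
  then show ?thesis by simp
qed

lemma key:
  fixes f g :: "real \<Rightarrow> real"
  assumes ab: "a < b" and t: "t \<in> {a..b}" and fab: "f a = f b"
    and g1: "(g has_integral f t - f a) {a..t}" and g2: "(g has_integral f b - f t) {t..b}"
    and sg: "((\<lambda>s. (s - t) * g s) has_integral (b - a) * f a) {a..b}"
    and g2i: "((\<lambda>s. (g s)^2) has_integral C) {a..b}"
  shows "(f t)^2 \<le> (b - a) / 12 * C"
proof -
  define L where "L = b - a"
  have L: "L > 0" using ab by (simp add: L_def)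
  have at: "a \<le> t" and tb: "t \<le> b" using t by auto
  define k where "k s = (if s \<le> t then s - t + L/2 else s - t - L/2)" for s
  have "(\<lambda>s. (s - t) * g s) integrable_on {a..t}" "(\<lambda>s. (s - t) * g s) integrable_on {t..b}"
    using sg at tb by (auto intro: integrable_on_subinterval simp: has_integral_integrable)
  then obtain I1 I2 where I1: "((\<lambda>s. (s - t) * g s) has_integral I1) {a..t}"
    and I2: "((\<lambda>s. (s - t) * g s) has_integral I2) {t..b}" by (auto simp: integrable_on_def)
  have "((\<lambda>s. (s - t) * g s) has_integral I1 + I2) {a..b}" by (rule has_integral_combine[OF at tb I1 I2])
  then have I12: "I1 + I2 = L * f a" using sg by (simp add: L_def has_integral_unique)
  have K1: "((\<lambda>s. k s * g s) has_integral I1 + L/2 * (f t - f a)) {a..t}"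
  proof -
    have "((\<lambda>s. (s - t) * g s + L/2 * g s) has_integral I1 + L/2 * (f t - f a)) {a..t}"
      by (intro has_integral_add I1 has_integral_mult_right g1)
    then show ?thesis by (rule has_integral_cong[THEN iffD1, rotated]) (auto simp: k_def algebra_simps)
  qed
  have K2: "((\<lambda>s. k s * g s) has_integral I2 - L/2 * (f b - f t)) {t..b}"
  proof -
    have "((\<lambda>s. (s - t) * g s - L/2 * g s) has_integral I2 - L/2 * (f b - f t)) {t..b}"
      by (intro has_integral_diff I2 has_integral_mult_right g2)
    then show ?thesis by (rule has_integral_spike[OF negligible_sing[of t], rotated]) (auto simp: k_def algebra_simps)
  qed
  have KG: "((\<lambda>s. k s * g s) has_integral L * f t) {a..b}"
  proof -
    have "((\<lambda>s. k s * g s) has_integral (I1 + L/2 * (f t - f a)) + (I2 - L/2 * (f b - f t))) {a..b}"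
      by (rule has_integral_combine[OF at tb K1 K2])
    moreover have "(I1 + L/2 * (f t - f a)) + (I2 - L/2 * (f b - f t)) = L * f t"
    proof -
      have "I2 = L * f a - I1" using I12 by simp
      then show ?thesis by (simp add: fab field_simps)
    qed
    ultimately show ?thesis by simp
  qed
  have A1: "((\<lambda>s. (k s)^2) has_integral ((t + (L/2 - t))^3/3 - (a + (L/2 - t))^3/3)) {a..t}"
    using poly_int[OF at, of "L/2 - t"] by (rule has_integral_cong[THEN iffD1, rotated]) (auto simp: k_def algebra_simps)
  have A2: "((\<lambda>s. (k s)^2) has_integral ((b + (- L/2 - t))^3/3 - (t + (- L/2 - t))^3/3)) {t..b}"
    using poly_int[OF tb, of "- L/2 - t"] by (rule has_integral_cong[THEN iffD1, rotated]) (auto simp: k_def algebra_simps power2_eq_square)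
  have AA: "((\<lambda>s. (k s)^2) has_integral L^3/12) {a..b}"
  proof -
    have P: "((\<lambda>s. (k s)^2) has_integral ((t + (L/2 - t))^3/3 - (a + (L/2 - t))^3/3) + ((b + (- L/2 - t))^3/3 - (t + (- L/2 - t))^3/3)) {a..b}"
      by (rule has_integral_combine[OF at tb A1 A2])
    have E: "((t + (L/2 - t))^3/3 - (a + (L/2 - t))^3/3) + ((b + (- L/2 - t))^3/3 - (t + (- L/2 - t))^3/3) = L^3/12"
      unfolding L_def by (simp add: field_simps power3_eq_cube)
    show ?thesis using P unfolding E .
  qed
  have "(L * f t)^2 \<le> L^3/12 * C" by (rule cs_hk[OF AA KG g2i]) (use L in simp)
  then have "L^2 * (f t)^2 \<le> L^2 * (L / 12 * C)" by (simp add: power_mult_distrib power3_eq_cube power2_eq_square algebra_simps)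
  then have "(f t)^2 \<le> L / 12 * C" using L by (simp add: mult_le_cancel_left)
  then show ?thesis by (simp add: L_def)
qed



lemma part1:
  fixes f g :: "real \<Rightarrow> real"
  assumes adm: "admissible I a b f g"
  shows "ennreal (SUP x\<in>{a..b}. (f x)\<^sup>2)
              \<le> ennreal ((b - a) / 12) * (\<integral>\<^sup>+ x\<in>{a..b}. ennreal ((g x)\<^sup>2) \<partial>lborel)"
proof -
  from adm have intI: "is_interval I" and acI: "abs_cont_on (interior I) f" and aI: "a \<in> interior I"
    and bI: "b \<in> interior I" and ab: "a < b"
    and aeD: "AE x in lborel. x \<in> interior I \<longrightarrow> (f has_real_derivative g x) (at x)"
    and gint: "set_integrable lborel {a..b} g" and fab: "f a = f b"
    and fint0: "(LBINT t:{a..b}. f t) = 0"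
    unfolding admissible_def by auto
  have sub: "{a..b} \<subseteq> interior I"
  proof -
    have "convex (interior I)" using intI by (simp add: is_interval_convex)
    then have "closed_segment a b \<subseteq> interior I" using aI bI unfolding convex_contains_segment by blast
    then show ?thesis using ab by (simp add: closed_segment_eq_real_ivl)
  qed
  have ac: "abs_cont_on {a..b} f" by (rule abs_cont_on_subset[OF acI sub])
  from aeD obtain N0 where N0: "{x \<in> space lborel. \<not> (x \<in> interior I \<longrightarrow> (f has_real_derivative g x) (at x))} \<subseteq> N0"
    "emeasure lborel N0 = 0" "N0 \<in> sets lborel" by (rule AE_E)
  have "N0 \<in> null_sets lborel" using N0 by auto
  then have negN: "negligible N0" by (simp add: negligible_iff_null_sets null_sets_completionI)
  have der: "(f has_real_derivative g x) (at x)" if "x \<in> {a..b}" "x \<notin> N0" for x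
    using N0(1) sub that by auto
  have contf: "continuous_on {a..b} f" by (rule abs_cont_continuous[OF ac])
  have g1: "(g has_integral f t - f a) {a..t}" if t: "t \<in> {a..b}" for t
    using t by (intro ac_ftc[OF _ abs_cont_on_subset[OF ac] negN] der) auto
  have g2: "(g has_integral f b - f t) {t..b}" if t: "t \<in> {a..b}" for t
    using t by (intro ac_ftc[OF _ abs_cont_on_subset[OF ac] negN] der) auto
  have fi: "(f has_integral 0) {a..b}"
  proof -
    have si: "set_integrable lborel {a..b} f" by (rule borel_integrable_atLeastAtMost'[OF contf])
    have "integral {a..b} f = 0" using set_borel_integral_eq_integral(2)[OF si] fint0 by simp
    then show ?thesis using set_borel_integral_eq_integral(1)[OF si] by (metis integrable_integral)
  qed
  have sg: "((\<lambda>s. (s - t) * g s) has_integral (b - a) * f a) {a..b}" if t: "t \<in> {a..b}" for t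
  proof -
    have "((\<lambda>s. f s + (s - t) * g s) has_integral ((b - t) * f b - (a - t) * f a)) {a..b}"
    proof (rule ac_ftc[where F = "\<lambda>s. (s - t) * f s", OF _ abs_cont_mult[OF ac] negN])
      show "a \<le> b" using ab by simp
      fix x assume "x \<in> {a..b}" "x \<notin> N0"
      then have "((\<lambda>s. (s - t) * f s) has_real_derivative ((x - t) * g x + (1 - 0) * f x)) (at x)"
        by (intro DERIV_mult' DERIV_diff DERIV_ident DERIV_const der)
      then show "((\<lambda>s. (s - t) * f s) has_real_derivative f x + (x - t) * g x) (at x)"
        by (simp add: algebra_simps)
    qed
    from has_integral_diff[OF this fi]
    have "((\<lambda>s. f s + (s - t) * g s - f s) has_integral ((b - t) * f b - (a - t) * f a) - 0) {a..b}" .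
    then show ?thesis using fab by (simp add: algebra_simps)
  qed
  define Q where "Q = (\<integral>\<^sup>+ x\<in>{a..b}. ennreal ((g x)\<^sup>2) \<partial>lborel)"
  define \<phi> where "\<phi> x = (indicator {a..b} x *\<^sub>R g x)^2" for x
  have Qeq: "Q = (\<integral>\<^sup>+ x. ennreal (\<phi> x) \<partial>lborel)"
    unfolding Q_def by (intro nn_integral_cong) (auto simp: \<phi>_def indicator_def)
  have \<phi>meas: "\<phi> \<in> borel_measurable lborel"
    using borel_measurable_integrable[OF gint[unfolded set_integrable_def]] unfolding \<phi>_def by measurable
  show ?thesis
  proof (cases "Q = \<infinity>")
    case True
    have "ennreal ((b - a) / 12) \<noteq> 0" using ab by simp
    then show ?thesis using True by (simp add: Q_def[symmetric] ennreal_mult_top)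
  next
    case False
    then have "(\<integral>\<^sup>+ x. ennreal (\<phi> x) \<partial>lborel) < \<infinity>" using Qeq by (simp add: top.not_eq_extremum)
    then have \<phi>int: "integrable lborel \<phi>" using \<phi>meas by (intro integrableI_nonneg) (auto simp: \<phi>_def)
    define C where "C = integral\<^sup>L lborel \<phi>"
    have QC: "Q = ennreal C" unfolding Qeq C_def by (rule nn_integral_eq_integral[OF \<phi>int]) (auto simp: \<phi>_def)
    have C0: "C \<ge> 0" unfolding C_def by (rule integral_nonneg_AE) (auto simp: \<phi>_def)
    have "(\<phi> has_integral C) UNIV" unfolding C_def by (rule has_integral_integral_lborel[OF \<phi>int])
    moreover have "\<phi> = (\<lambda>x. if x \<in> {a..b} then (g x)^2 else 0)" by (auto simp: fun_eq_iff \<phi>_def indicator_def)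
    ultimately have g2i: "((\<lambda>s. (g s)^2) has_integral C) {a..b}" using has_integral_restrict_UNIV by metis
    have bnd: "(f t)^2 \<le> (b - a) / 12 * C" if t: "t \<in> {a..b}" for t
      by (rule key[OF ab t fab g1[OF t] g2[OF t] sg[OF t] g2i])
    have "(SUP x\<in>{a..b}. (f x)\<^sup>2) \<le> (b - a) / 12 * C"
      using ab bnd by (intro cSUP_least) auto
    then have "ennreal (SUP x\<in>{a..b}. (f x)\<^sup>2) \<le> ennreal ((b - a) / 12 * C)" by (rule ennreal_leI)
    also have "\<dots> = ennreal ((b - a) / 12) * Q" unfolding QC by (rule ennreal_mult) (use ab C0 in auto)
    finally show ?thesis by (simp add: Q_def)
  qed
qed



lemma lip_abs_cont:
  fixes F :: "real \<Rightarrow> real"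
  assumes K: "K \<ge> 0" and lip: "\<And>x y. \<bar>F y - F x\<bar> \<le> K * \<bar>y - x\<bar>"
  shows "abs_cont_on S F"
  unfolding abs_cont_on_def
proof (intro allI impI)
  fix e :: real assume e: "e > 0"
  show "\<exists>r>0. \<forall>(n::nat) (x::nat \<Rightarrow> real) (y::nat \<Rightarrow> real).
        (\<forall>k<n. x k < y k \<and> {x k..y k} \<subseteq> S) \<and>
        (\<forall>j<n. \<forall>k<n. j \<noteq> k \<longrightarrow> y j \<le> x k \<or> y k \<le> x j) \<and>
        (\<Sum>k<n. y k - x k) < r
        \<longrightarrow> (\<Sum>k<n. \<bar>F (y k) - F (x k)\<bar>) < e"
  proof (intro exI[of _ "e / (K + 1)"] conjI allI impI)
    show "e / (K + 1) > 0" using e K by simp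
    fix n :: nat and X Y :: "nat \<Rightarrow> real"
    assume H: "(\<forall>k<n. X k < Y k \<and> {X k..Y k} \<subseteq> S) \<and>
        (\<forall>j<n. \<forall>k<n. j \<noteq> k \<longrightarrow> Y j \<le> X k \<or> Y k \<le> X j) \<and>
        (\<Sum>k<n. Y k - X k) < e / (K + 1)"
    have S0: "(\<Sum>k<n. Y k - X k) \<ge> 0" using H by (intro sum_nonneg) (auto simp: less_imp_le)
    have "(\<Sum>k<n. \<bar>F (Y k) - F (X k)\<bar>) \<le> (\<Sum>k<n. K * (Y k - X k))"
    proof (rule sum_mono)
      fix k assume "k \<in> {..<n}"
      then have "X k < Y k" using H by auto
      then show "\<bar>F (Y k) - F (X k)\<bar> \<le> K * (Y k - X k)" using lip[of "X k" "Y k"] by simp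
    qed
    also have "\<dots> = K * (\<Sum>k<n. Y k - X k)" by (simp add: sum_distrib_left)
    also have "\<dots> \<le> (K + 1) * (\<Sum>k<n. Y k - X k)" using S0 by (intro mult_right_mono) auto
    also have "\<dots> < (K + 1) * (e / (K + 1))" using H K by (intro mult_strict_left_mono) auto
    also have "\<dots> = e" using K by simp
    finally show "(\<Sum>k<n. \<bar>F (Y k) - F (X k)\<bar>) < e" .
  qed
qed

lemma part2:
  fixes I :: "real set" and a b c :: real
  assumes intI: "is_interval I" and aI: "a \<in> interior I" and bI: "b \<in> interior I" and ab: "a < b"
    and c: "c < (b - a) / 12"
  shows "\<exists>f g. admissible I a b f g \<and>
              \<not> (ennreal (SUP x\<in>{a..b}. (f x)\<^sup>2)
                   \<le> ennreal c * (\<integral>\<^sup>+ x\<in>{a..b}. ennreal ((g x)\<^sup>2) \<partial>lborel))"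
proof -
  define L where "L = b - a"
  have L: "L > 0" using ab by (simp add: L_def)
  define p where "p x = -1/2 + 3 * (2*x - a - b)^2 / (2 * L^2)" for x
  define p' where "p' x = 6 * (2*x - a - b) / L^2" for x
  define f where "f x = p (max a (min b x))" for x
  define g where "g x = (if x \<in> {a..b} then p' x else 0)" for x
  have dp: "(p has_real_derivative p' x) (at x)" for x
  proof -
    have peq: "p = (\<lambda>x. -1/2 + (3 / (2 * L^2)) * (2*x - a - b)^2)" by (auto simp: p_def fun_eq_iff)
    have sqd: "((\<lambda>x. (2*x - a - b)^2) has_real_derivative 2 * (2*x - a - b) * 2) (at x)"
      by (auto intro!: derivative_eq_intros)
    have "((\<lambda>x. -1/2 + (3 / (2 * L^2)) * (2*x - a - b)^2) has_real_derivative
            0 + (3 / (2 * L^2)) * (2 * (2*x - a - b) * 2)) (at x)"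
      by (intro DERIV_add DERIV_const DERIV_cmult sqd)
    moreover have "0 + (3 / (2 * L^2)) * (2 * (2*x - a - b) * 2) = p' x"
      using L by (simp add: p'_def field_simps)
    ultimately show ?thesis unfolding peq by simp
  qed
  have fp: "f x = p x" if "x \<in> {a..b}" for x using that by (simp add: f_def)
  have e2: "(2*a - a - b)^2 = L^2" "(2*b - a - b)^2 = L^2" by (simp_all add: L_def power2_eq_square algebra_simps)
  have pa: "p a = 1" "p b = 1" using L unfolding p_def e2 by simp_all
  have sq: "(2*x - a - b)^2 \<le> L^2" if "x \<in> {a..b}" for x
  proof -
    have "\<bar>2*x - a - b\<bar> \<le> \<bar>L\<bar>" using that by (auto simp: L_def)
    then show ?thesis by (simp add: abs_le_square_iff)
  qed
  have pb: "p x \<le> 1 \<and> -1 \<le> p x" if "x \<in> {a..b}" for x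
  proof -
    have "3 * (2*x - a - b)^2 / (2 * L^2) \<le> 3 * L^2 / (2 * L^2)"
      using sq[OF that] L by (intro divide_right_mono) auto
    also have "\<dots> = 3/2" using L by simp
    finally have "3 * (2*x - a - b)^2 / (2 * L^2) \<le> 3/2" .
    moreover have "3 * (2*x - a - b)^2 / (2 * L^2) \<ge> 0" by simp
    ultimately show ?thesis unfolding p_def by linarith
  qed
  have plip: "\<bar>p Y - p X\<bar> \<le> 6 / L * \<bar>Y - X\<bar>" if "X \<in> {a..b}" "Y \<in> {a..b}" for X Y
  proof -
    have eq: "p Y - p X = 6 / L^2 * ((Y - X) * (Y + X - a - b))"
      using L by (simp add: p_def field_simps power2_eq_square)
    have "\<bar>Y + X - a - b\<bar> \<le> L" using that by (auto simp: L_def)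
    then have "\<bar>Y - X\<bar> * \<bar>Y + X - a - b\<bar> \<le> \<bar>Y - X\<bar> * L" by (intro mult_left_mono) auto
    then have "6 / L^2 * (\<bar>Y - X\<bar> * \<bar>Y + X - a - b\<bar>) \<le> 6 / L^2 * (\<bar>Y - X\<bar> * L)"
      by (rule mult_left_mono) auto
    moreover have "6 / L^2 * (\<bar>Y - X\<bar> * L) = 6 / L * \<bar>Y - X\<bar>" using L by (simp add: power2_eq_square)
    ultimately show ?thesis unfolding eq using L by (simp add: abs_mult)
  qed
  have flip: "\<bar>f y - f x\<bar> \<le> 6 / L * \<bar>y - x\<bar>" for x y
  proof -
    have cl: "\<bar>max a (min b y) - max a (min b x)\<bar> \<le> \<bar>y - x\<bar>" by (auto simp: max_def min_def)
    have "\<bar>f y - f x\<bar> \<le> 6 / L * \<bar>max a (min b y) - max a (min b x)\<bar>"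
      unfolding f_def using ab by (intro plip) auto
    also have "\<dots> \<le> 6 / L * \<bar>y - x\<bar>" using cl L by (intro mult_left_mono) auto
    finally show ?thesis .
  qed
  have derf: "(f has_real_derivative g x) (at x)" if "x \<noteq> a" "x \<noteq> b" for x
  proof -
    have "x < a \<or> (a < x \<and> x < b) \<or> b < x" using that by linarith
    then consider "x < a" | "a < x \<and> x < b" | "b < x" by blast
    then show ?thesis
    proof cases
      case 1
      have "((\<lambda>_. p a) has_real_derivative 0) (at x)" by simp
      then have "(f has_real_derivative 0) (at x)"
        by (rule has_field_derivative_transform_within_open[where S="{..<a}"])
           (use 1 ab in \<open>auto simp: f_def max_def min_def\<close>)
      moreover have "g x = 0" using 1 ab by (simp add: g_def)
      ultimately show ?thesis by simp
    next
      case 2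
      have "(p has_real_derivative p' x) (at x)" by (rule dp)
      then have "(f has_real_derivative p' x) (at x)"
        by (rule has_field_derivative_transform_within_open[where S="{a<..<b}"])
           (use 2 in \<open>auto simp: f_def max_def min_def\<close>)
      moreover have "g x = p' x" using 2 by (simp add: g_def)
      ultimately show ?thesis by simp
    next
      case 3
      have "((\<lambda>_. p b) has_real_derivative 0) (at x)" by simp
      then have "(f has_real_derivative 0) (at x)"
        by (rule has_field_derivative_transform_within_open[where S="{b<..}"])
           (use 3 ab in \<open>auto simp: f_def max_def min_def\<close>)
      moreover have "g x = 0" using 3 ab by (simp add: g_def)
      ultimately show ?thesis by simp
    qed
  qed
  have pcont: "continuous_on {a..b} p" unfolding p_def using L by (intro continuous_intros) auto
  have p'cont: "continuous_on {a..b} p'" unfolding p'_def using L by (intro continuous_intros) auto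
  have fcont: "continuous_on {a..b} f" by (rule continuous_on_eq[OF pcont]) (simp add: fp)
  have ipoly: "((\<lambda>s. (2 * s - a - b)^2) has_integral L^3/3) {a..b}"
  proof -
    have "((\<lambda>s. (s + (-(a+b)/2))^2) has_integral ((b + (-(a+b)/2))^3/3 - (a + (-(a+b)/2))^3/3)) {a..b}"
      using ab by (intro poly_int) auto
    from has_integral_mult_right[OF this, of 4]
    have P: "((\<lambda>s. 4 * (s + (-(a+b)/2))^2) has_integral 4 * ((b + (-(a+b)/2))^3/3 - (a + (-(a+b)/2))^3/3)) {a..b}" .
    have E: "4 * ((b + (-(a+b)/2))^3/3 - (a + (-(a+b)/2))^3/3) = L^3/3"
      unfolding L_def by (simp add: field_simps power3_eq_cube)
    have F: "(\<lambda>s. 4 * (s + (-(a+b)/2))^2) = (\<lambda>s. (2 * s - a - b)^2)"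
      by (auto simp: fun_eq_iff power2_eq_square field_simps)
    show ?thesis using P unfolding E F .
  qed
  have fint: "(f has_integral 0) {a..b}"
  proof -
    have P: "((\<lambda>s. -1/2 + 3 / (2 * L^2) * (2 * s - a - b)^2) has_integral (cnt {a..b} *\<^sub>R (-1/2) + 3 / (2 * L^2) * (L^3/3))) {a..b}"
      by (intro has_integral_add has_integral_const_real has_integral_mult_right ipoly)
    have cntab: "cnt {a..b} = L" using ab by (simp add: L_def)
    have E: "cnt {a..b} *\<^sub>R (-1/2) + 3 / (2 * L^2) * (L^3/3) = 0"
      using L unfolding cntab by (simp add: power2_eq_square power3_eq_cube field_simps)
    have "((\<lambda>s. -1/2 + 3 / (2 * L^2) * (2 * s - a - b)^2) has_integral 0) {a..b}" using P unfolding E .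
    then show ?thesis by (rule has_integral_cong[THEN iffD1, rotated]) (auto simp: fp p_def)
  qed
  have adm: "admissible I a b f g"
    unfolding admissible_def
  proof (intro conjI)
    show "is_interval I" "a \<in> interior I" "b \<in> interior I" "a < b" by fact+
    show "abs_cont_on (interior I) f" by (rule lip_abs_cont[OF _ flip]) (use L in simp)
    have "AE x in lborel. x \<noteq> a" "AE x in lborel. x \<noteq> b" by (rule AE_lborel_singleton)+
    then show "AE x in lborel. x \<in> interior I \<longrightarrow> (f has_real_derivative g x) (at x)"
      by eventually_elim (use derf in auto)
    have "(\<lambda>x. indicator {a..b} x *\<^sub>R g x) = (\<lambda>x. indicator {a..b} x *\<^sub>R p' x)"
      by (auto simp: fun_eq_iff g_def indicator_def)
    then show "set_integrable lborel {a..b} g"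
      using borel_integrable_atLeastAtMost'[OF p'cont] by (simp add: set_integrable_def)
    show "\<forall>x\<in>{a..b}. f x \<le> f a" using pb fp pa ab by auto
    show "f a = f b" using fp pa ab by simp
    have si: "set_integrable lborel {a..b} f" by (rule borel_integrable_atLeastAtMost'[OF fcont])
    show "(LBINT t:{a..b}. f t) = 0"
      using set_borel_integral_eq_integral(2)[OF si] fint by (simp add: integral_unique)
  qed
  have sup1: "1 \<le> (SUP x\<in>{a..b}. (f x)\<^sup>2)"
  proof -
    have "(f a)^2 \<le> (SUP x\<in>{a..b}. (f x)\<^sup>2)"
    proof (rule cSUP_upper)
      show "a \<in> {a..b}" using ab by simp
      show "bdd_above ((\<lambda>x. (f x)\<^sup>2) ` {a..b})"
      proof (rule bdd_aboveI2)
        fix x assume x: "x \<in> {a..b}"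
        have "\<bar>f x\<bar> \<le> 1" using pb[OF x] fp[OF x] by auto
        then show "(f x)\<^sup>2 \<le> 1" by (simp add: abs_le_square_iff[of "f x" 1, simplified])
      qed
    qed
    then show ?thesis using fp pa ab by simp
  qed
  have g2: "((\<lambda>x. (p' x)^2) has_integral 12 / L) {a..b}"
  proof -
    from has_integral_mult_right[OF ipoly, of "36 / L^4"]
    have P: "((\<lambda>s. 36 / L^4 * (2 * s - a - b)^2) has_integral 36 / L^4 * (L^3/3)) {a..b}" .
    have E: "36 / L^4 * (L^3/3) = 12 / L" using L by (simp add: field_simps power3_eq_cube power4_eq_xxxx)
    have F: "(\<lambda>s. 36 / L^4 * (2 * s - a - b)^2) = (\<lambda>x. (p' x)^2)"
      using L by (auto simp: fun_eq_iff p'_def power2_eq_square power4_eq_xxxx field_simps)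
    show ?thesis using P unfolding E F .
  qed
  have NN: "(\<integral>\<^sup>+ x\<in>{a..b}. ennreal ((g x)\<^sup>2) \<partial>lborel) = ennreal (12 / L)"
  proof -
    have "(\<integral>\<^sup>+ x\<in>{a..b}. ennreal ((g x)\<^sup>2) \<partial>lborel) = (\<integral>\<^sup>+ x. ennreal ((p' x)\<^sup>2) * indicator {a..b} x \<partial>lborel)"
      by (intro nn_integral_cong) (auto simp: g_def indicator_def)
    also have "\<dots> = ennreal (12 / L)" by (rule nn_integral_has_integral_lebesgue'[OF _ g2]) simp
    finally show ?thesis .
  qed
  have "ennreal c * ennreal (12 / L) = ennreal (max 0 c) * ennreal (12 / L)" by (simp add: ennreal_max_0)
  also have "\<dots> = ennreal (max 0 c * (12 / L))" by (rule ennreal_mult[symmetric]) (use L in auto)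
  also have "\<dots> < ennreal 1"
  proof (rule ennreal_lessI)
    show "0 < (1::real)" by simp
    have "max 0 c * (12 / L) < (L / 12) * (12 / L)"
      using c L by (intro mult_strict_right_mono) (auto simp: L_def)
    then show "max 0 c * (12 / L) < 1" using L by simp
  qed
  also have "\<dots> \<le> ennreal (SUP x\<in>{a..b}. (f x)\<^sup>2)" using sup1 by (rule ennreal_leI)
  finally have "\<not> (ennreal (SUP x\<in>{a..b}. (f x)\<^sup>2) \<le> ennreal c * (\<integral>\<^sup>+ x\<in>{a..b}. ennreal ((g x)\<^sup>2) \<partial>lborel))"
    unfolding NN by (simp add: not_le)
  with adm show ?thesis by blast
qed


theorem theorem5:
  fixes I :: "real set" and a b :: real
  assumes "is_interval I" and "a \<in> interior I" and "b \<in> interior I" and "a < b"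
  shows "(\<forall>f g. admissible I a b f g \<longrightarrow>
            ennreal (SUP x\<in>{a..b}. (f x)\<^sup>2)
              \<le> ennreal ((b - a) / 12) * (\<integral>\<^sup>+ x\<in>{a..b}. ennreal ((g x)\<^sup>2) \<partial>lborel))
       \<and> (\<forall>c. c < (b - a) / 12 \<longrightarrow>
            (\<exists>f g. admissible I a b f g \<and>
              \<not> (ennreal (SUP x\<in>{a..b}. (f x)\<^sup>2)
                   \<le> ennreal c * (\<integral>\<^sup>+ x\<in>{a..b}. ennreal ((g x)\<^sup>2) \<partial>lborel))))"
proof (intro conjI allI impI)
  fix f g :: "real \<Rightarrow> real"
  assume "admissible I a b f g"
  then show "ennreal (SUP x\<in>{a..b}. (f x)\<^sup>2)
              \<le> ennreal ((b - a) / 12) * (\<integral>\<^sup>+ x\<in>{a..b}. ennreal ((g x)\<^sup>2) \<partial>lborel)"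
    by (rule part1)
next
  fix c :: real
  assume "c < (b - a) / 12"
  then show "\<exists>f g. admissible I a b f g \<and>
              \<not> (ennreal (SUP x\<in>{a..b}. (f x)\<^sup>2)
                   \<le> ennreal c * (\<integral>\<^sup>+ x\<in>{a..b}. ennreal ((g x)\<^sup>2) \<partial>lborel))"
    by (rule part2[OF assms])
qed

end
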